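(* Even for two teams with identical valuations and nonnegative-value players, there does not necessarily exist an allocation that is both EF1 and player-Pareto optimal.
   Context: Setting: teams $T=[n]$, players $P=\{p_1,\dots,p_m\}$. Each player $p$ has a complete, transitive weak preference $\succsim_p$ over $T$. Each team $i$ has an additive valuation $v_i:2^P\to\mathbb{R}$, $v_i(S)=\sum_{p\in S}v_i(p)$; nonnegative-value players means $v_i(p)\ge0$ for all $i,p$; identical valuations means $v_1=v_2=\dots=v_n$. An allocation is an ordered partition $(A_1,\dots,A_n)$ of $P$. $A$ is EF1 if for all distinct $i,j$ there are $X\subseteq A_i$, $Y\subseteq A_j$ with $|X\cup Y|\le1$ and $v_i(A_i\setminus X)\ge v_i(A_j\setminus Y)$. A player is better (worse) off in $A'$ than in $A$ if she strictly prefers (strictly disprefers) her team in $A'$ to her team in $A$. $A$ is player-Pareto dominated by $A'$ if no player is worse off and at least one player is better off; $A$ is player-Pareto optimal (player-PO) if it is not player-Pareto dominated by any allocation. *)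

theory Defs
  imports Complex_Main
begin

text \<open>Teams are 0,...,n-1 (the paper's [n] shifted by one); players form a finite set P.
  pref p i j means: player p weakly prefers team i to team j.
  v i p is the value of player p for team i; v i S = sum of v i over S.\<close>

definition weak_pref_profile :: "nat \<Rightarrow> 'p set \<Rightarrow> ('p \<Rightarrow> nat \<Rightarrow> nat \<Rightarrow> bool) \<Rightarrow> bool" where
  "weak_pref_profile n P pref \<longleftrightarrow>
     (\<forall>p\<in>P. (\<forall>i<n. \<forall>j<n. pref p i j \<or> pref p j i) \<and>
             (\<forall>i<n. \<forall>j<n. \<forall>k<n. pref p i j \<longrightarrow> pref p j k \<longrightarrow> pref p i k))"

definition strict_pref :: "('p \<Rightarrow> nat \<Rightarrow> nat \<Rightarrow> bool) \<Rightarrow> 'p \<Rightarrow> nat \<Rightarrow> nat \<Rightarrow> bool" where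
  "strict_pref pref p i j \<longleftrightarrow> pref p i j \<and> \<not> pref p j i"

definition is_allocation :: "nat \<Rightarrow> 'p set \<Rightarrow> (nat \<Rightarrow> 'p set) \<Rightarrow> bool" where
  "is_allocation n P A \<longleftrightarrow>
     (\<forall>i<n. A i \<subseteq> P) \<and> (\<forall>p\<in>P. \<exists>!i. i < n \<and> p \<in> A i)"

definition val :: "(nat \<Rightarrow> 'p \<Rightarrow> real) \<Rightarrow> nat \<Rightarrow> 'p set \<Rightarrow> real" where
  "val v i S = (\<Sum>p\<in>S. v i p)"

definition EF1 :: "nat \<Rightarrow> (nat \<Rightarrow> 'p \<Rightarrow> real) \<Rightarrow> (nat \<Rightarrow> 'p set) \<Rightarrow> bool" where
  "EF1 n v A \<longleftrightarrow>
     (\<forall>i<n. \<forall>j<n. i \<noteq> j \<longrightarrow>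
        (\<exists>X Y. X \<subseteq> A i \<and> Y \<subseteq> A j \<and> card (X \<union> Y) \<le> 1 \<and> finite (X \<union> Y) \<and>
               val v i (A i - X) \<ge> val v i (A j - Y)))"

definition better_off :: "nat \<Rightarrow> ('p \<Rightarrow> nat \<Rightarrow> nat \<Rightarrow> bool) \<Rightarrow> (nat \<Rightarrow> 'p set) \<Rightarrow> (nat \<Rightarrow> 'p set) \<Rightarrow> 'p \<Rightarrow> bool" where
  "better_off n pref A' A p \<longleftrightarrow>
     (\<exists>i<n. \<exists>j<n. p \<in> A' i \<and> p \<in> A j \<and> strict_pref pref p i j)"

definition worse_off :: "nat \<Rightarrow> ('p \<Rightarrow> nat \<Rightarrow> nat \<Rightarrow> bool) \<Rightarrow> (nat \<Rightarrow> 'p set) \<Rightarrow> (nat \<Rightarrow> 'p set) \<Rightarrow> 'p \<Rightarrow> bool" where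
  "worse_off n pref A' A p \<longleftrightarrow>
     (\<exists>i<n. \<exists>j<n. p \<in> A' i \<and> p \<in> A j \<and> strict_pref pref p j i)"

definition player_pareto_dominated ::
  "nat \<Rightarrow> 'p set \<Rightarrow> ('p \<Rightarrow> nat \<Rightarrow> nat \<Rightarrow> bool) \<Rightarrow> (nat \<Rightarrow> 'p set) \<Rightarrow> (nat \<Rightarrow> 'p set) \<Rightarrow> bool" where
  "player_pareto_dominated n P pref A A' \<longleftrightarrow>
     (\<forall>p\<in>P. \<not> worse_off n pref A' A p) \<and> (\<exists>p\<in>P. better_off n pref A' A p)"

definition player_PO :: "nat \<Rightarrow> 'p set \<Rightarrow> ('p \<Rightarrow> nat \<Rightarrow> nat \<Rightarrow> bool) \<Rightarrow> (nat \<Rightarrow> 'p set) \<Rightarrow> bool" where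
  "player_PO n P pref A \<longleftrightarrow>
     \<not> (\<exists>A'. is_allocation n P A' \<and> player_pareto_dominated n P pref A A')"

end

theory Submission
  imports Defs
begin

lemma key:
  assumes al: "is_allocation 2 {0::nat,1} A" and ef: "EF1 2 (\<lambda>i p. 1::real) A"
    and po: "player_PO 2 {0::nat,1} (\<lambda>p i j. i \<le> j) A"
  shows False
proof -
  let ?P = "{0::nat,1}"
  let ?pref = "\<lambda>(p::nat) (i::nat) (j::nat). i \<le> j"
  have sub: "\<And>i. i < 2 \<Longrightarrow> A i \<subseteq> ?P" using al unfolding is_allocation_def by blast
  have ex: "\<And>p. p \<in> ?P \<Longrightarrow> \<exists>i. i < 2 \<and> p \<in> A i" using al unfolding is_allocation_def by blast
  have A1: "A 1 = {}"
  proof (rule ccontr)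
    assume "A 1 \<noteq> {}"
    then obtain p where p: "p \<in> A 1" by blast
    have pP: "p \<in> ?P" using sub[of 1] p by auto
    define A' where "A' = (\<lambda>i::nat. if i = 0 then ?P else {})"
    have "is_allocation 2 ?P A'" unfolding is_allocation_def A'_def by auto
    moreover have "\<forall>q\<in>?P. \<not> worse_off 2 ?pref A' A q"
      unfolding worse_off_def strict_pref_def A'_def by auto
    moreover have "better_off 2 ?pref A' A p"
      unfolding better_off_def strict_pref_def
    proof (intro exI conjI)
      show "(0::nat) < 2" "(1::nat) < 2" by auto
      show "p \<in> A' 0" using pP by (simp add: A'_def)
      show "p \<in> A 1" by (rule p)
    qed auto
    ultimately have "player_pareto_dominated 2 ?P ?pref A A'"
      unfolding player_pareto_dominated_def using pP by blast
    then show False using po \<open>is_allocation 2 ?P A'\<close> unfolding player_PO_def by blast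
  qed
  have A0: "A 0 = ?P"
  proof
    show "A 0 \<subseteq> ?P" using sub[of 0] by simp
    show "?P \<subseteq> A 0"
    proof
      fix p assume pP: "p \<in> ?P"
      then obtain i where "i < 2" "p \<in> A i" using ex by blast
      then show "p \<in> A 0" using A1 by (cases i) auto
    qed
  qed
  have e10: "\<exists>X Y. X \<subseteq> A 1 \<and> Y \<subseteq> A 0 \<and> card (X \<union> Y) \<le> 1 \<and> finite (X \<union> Y) \<and>
    val (\<lambda>i p. 1::real) 1 (A 1 - X) \<ge> val (\<lambda>i p. 1) 1 (A 0 - Y)"
    using ef[unfolded EF1_def, rule_format, of 1 0] by simp
  then obtain X Y where XY: "X \<subseteq> A 1" "Y \<subseteq> A 0" "card (X \<union> Y) \<le> 1" "finite (X \<union> Y)"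
    "val (\<lambda>i p. 1::real) 1 (A 1 - X) \<ge> val (\<lambda>i p. 1) 1 (A 0 - Y)"
    by blast
  have X: "X = {}" using XY A1 by auto
  have cY: "card Y \<le> 1" using XY X by simp
  have fY: "finite Y" using XY X by simp
  have "card ?P \<le> card (?P - Y) + card Y"
  proof -
    have "?P \<subseteq> (?P - Y) \<union> Y" by blast
    then have "card ?P \<le> card ((?P - Y) \<union> Y)" using fY by (intro card_mono) auto
    also have "\<dots> \<le> card (?P - Y) + card Y" by (rule card_Un_le)
    finally show ?thesis .
  qed
  then have c1: "card (?P - Y) \<ge> 1" using cY by simp
  have "val (\<lambda>i p. 1::real) 1 (?P - Y) = real (card (?P - Y))" unfolding val_def by simp
  then have "val (\<lambda>i p. 1::real) 1 (?P - Y) \<ge> 1" using c1 by simp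
  moreover have "val (\<lambda>i p. 1::real) 1 (A 1 - X) = 0" unfolding val_def using A1 by simp
  ultimately show False using XY(5) A0 by simp
qed

theorem proposition5:
  shows "\<exists>(P::nat set) pref (v::nat \<Rightarrow> nat \<Rightarrow> real).
           finite P \<and> weak_pref_profile 2 P pref \<and>
           (\<forall>i<2. \<forall>p\<in>P. v i p \<ge> 0) \<and>
           (\<forall>i<2. \<forall>p\<in>P. v i p = v 0 p) \<and>
           \<not> (\<exists>A. is_allocation 2 P A \<and> EF1 2 v A \<and> player_PO 2 P pref A)"
proof -
  have "weak_pref_profile 2 {0::nat,1} (\<lambda>p i j. i \<le> j)" unfolding weak_pref_profile_def by auto
  moreover have "\<not> (\<exists>A. is_allocation 2 {0::nat,1} A \<and> EF1 2 (\<lambda>i p. 1::real) A \<and> player_PO 2 {0,1} (\<lambda>p i j. i \<le> j) A)"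
    using key by blast
  ultimately show ?thesis by (intro exI[of _ "{0::nat,1}"] exI[of _ "\<lambda>p i j. i \<le> j"] exI[of _ "\<lambda>i p. 1::real"]) auto
qed

end
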